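(* Let $\mathcal W$ be a monotonic game on $[n]$, $i\neq j$ players, and $\hat{\mathcal W}$ the game obtained by imposing a symmetric weak quarrel between $i$ and $j$. Then the Shapley–Shubik index satisfies $\hat\psi^{SS}_i\le\psi^{SS}_i$ and $\hat\psi^{SS}_j\le\psi^{SS}_j$, where $\psi^{SS}$ and $\hat\psi^{SS}$ denote the index computed in $\mathcal W$ and $\hat{\mathcal W}$ respectively.
   Context: Players are $[n]=\{1,\dots,n\}$. A binary voting game on $[n]$ is identified with its collection $\mathcal W\subseteq 2^{[n]}$ of winning sets ($S\in\mathcal W$ means the division in which exactly the members of $S$ vote YES has outcome YES). It is monotonic if $T\subseteq S$ and $T\in\mathcal W$ imply $S\in\mathcal W$. Player $i$ is YES-decisive for $S$ in a game $\mathcal W$ if $i\in S$, $S\in\mathcal W$ and $S\setminus\{i\}\notin\mathcal W$. Symmetric weak quarrel between $i$ and $j$: for every $S\subseteq[n]\setminus\{i,j\}$, $S\cup\{i,j\}\in\hat{\mathcal W}\iff (S\cup\{i\}\in\mathcal W\text{ or }S\cup\{j\}\in\mathcal W)$; $S\in\hat{\mathcal W}\iff (S\cup\{i\}\in\mathcal W\text{ and }S\cup\{j\}\in\mathcal W)$; $S\cup\{i\}\in\hat{\mathcal W}\iff S\cup\{i\}\in\mathcal W$; $S\cup\{j\}\in\hat{\mathcal W}\iff S\cup\{j\}\in\mathcal W$. Shapley–Shubik index: for an ordering $\sigma=(\sigma_1,\dots,\sigma_n)$ of $[n]$, player $i$ is pivotal in $\sigma$ if $\sigma_k=i$ and $i$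 is YES-decisive for $\{\sigma_1,\dots,\sigma_k\}$; then $\psi^{SS}_i=\frac{1}{n!}\#\{\sigma: i\text{ is pivotal in }\sigma\}$. *)

theory Defs
  imports Complex_Main
begin

text \<open>Players are {1..n}; a game is its collection of winning sets (subsets of {1..n}).\<close>

definition monotonic_game :: "nat \<Rightarrow> nat set set \<Rightarrow> bool" where
  "monotonic_game n W \<longleftrightarrow> W \<subseteq> Pow {1..n} \<and>
     (\<forall>S T. T \<subseteq> S \<and> S \<subseteq> {1..n} \<and> T \<in> W \<longrightarrow> S \<in> W)"

definition yes_decisive :: "nat set set \<Rightarrow> nat \<Rightarrow> nat set \<Rightarrow> bool" where
  "yes_decisive W i S \<longleftrightarrow> i \<in> S \<and> S \<in> W \<and> S - {i} \<notin> W"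

definition sym_weak_quarrel :: "nat \<Rightarrow> nat set set \<Rightarrow> nat \<Rightarrow> nat \<Rightarrow> nat set set" where
  "sym_weak_quarrel n W i j = {T. T \<subseteq> {1..n} \<and>
     (let S = T - {i, j} in
       (if i \<in> T \<and> j \<in> T then (S \<union> {i} \<in> W \<or> S \<union> {j} \<in> W)
        else if i \<notin> T \<and> j \<notin> T then (S \<union> {i} \<in> W \<and> S \<union> {j} \<in> W)
        else T \<in> W))}"

definition orderings :: "nat \<Rightarrow> nat list set" where
  "orderings n = {xs. distinct xs \<and> set xs = {1..n}}"

definition pivotal :: "nat set set \<Rightarrow> nat \<Rightarrow> nat list \<Rightarrow> bool" where
  "pivotal W i xs \<longleftrightarrow> (\<exists>k < length xs. xs ! k = i \<and> yes_decisive W i (set (take (Suc k) xs)))"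

definition shapley_shubik :: "nat \<Rightarrow> nat set set \<Rightarrow> nat \<Rightarrow> real" where
  "shapley_shubik n W i = real (card {xs \<in> orderings n. pivotal W i xs}) / real (fact n)"

end

theory Submission
  imports Defs
begin

lemma swq_sym: "sym_weak_quarrel n W i j = sym_weak_quarrel n W j i"
  unfolding sym_weak_quarrel_def Let_def by (auto simp: insert_commute)

lemma key:
  assumes mon: "monotonic_game n W" and "i \<in> {1..n}" and "j \<in> {1..n}" and "i \<noteq> j"
    and P: "P \<subseteq> {1..n}" and d: "yes_decisive (sym_weak_quarrel n W i j) i P"
  shows "yes_decisive W i P"
proof -
  have M: "\<And>S T. T \<subseteq> S \<Longrightarrow> S \<subseteq> {1..n} \<Longrightarrow> T \<in> W \<Longrightarrow> S \<in> W"
    using mon unfolding monotonic_game_def by blast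
  have iP: "i \<in> P" and inQ: "P \<in> sym_weak_quarrel n W i j"
    and nQ: "P - {i} \<notin> sym_weak_quarrel n W i j"
    using d unfolding yes_decisive_def by auto
  show ?thesis
  proof (cases "j \<in> P")
    case True
    have e1: "(P - {i,j}) \<union> {j} = P - {i}" using True \<open>i\<noteq>j\<close> by auto
    have e2: "(P - {i}) - {i,j} = P - {i,j}" by auto
    have a: "(P - {i,j}) \<union> {i} \<in> W \<or> (P - {i,j}) \<union> {j} \<in> W"
      using inQ iP True unfolding sym_weak_quarrel_def Let_def by auto
    have b: "P - {i} \<notin> W"
      using nQ P True \<open>i\<noteq>j\<close> unfolding sym_weak_quarrel_def Let_def by auto
    have "(P - {i,j}) \<union> {i} \<in> W" using a b e1 by simp
    hence "P \<in> W" by (rule M[rotated 2]) (use P iP in auto)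
    thus ?thesis using iP b unfolding yes_decisive_def by auto
  next
    case False
    have a: "P \<in> W"
      using inQ iP False \<open>i\<noteq>j\<close> unfolding sym_weak_quarrel_def Let_def by auto
    have e: "(P - {i}) - {i,j} = P - {i}" using False by auto
    have b: "\<not> ((P - {i}) \<union> {i} \<in> W \<and> (P - {i}) \<union> {j} \<in> W)"
      using nQ P False unfolding sym_weak_quarrel_def Let_def by (auto simp: e)
    have "P - {i} \<notin> W"
    proof
      assume c: "P - {i} \<in> W"
      have "(P - {i}) \<union> {i} \<in> W" by (rule M[OF _ _ c]) (use P iP in auto)
      moreover have "(P - {i}) \<union> {j} \<in> W" by (rule M[OF _ _ c]) (use P \<open>j \<in> {1..n}\<close> in auto)
      ultimately show False using b by blast
    qed
    thus ?thesis using iP a unfolding yes_decisive_def by auto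
  qed
qed

lemma fin: "finite {xs \<in> orderings n. pivotal W i xs}"
proof -
  have "{xs \<in> orderings n. pivotal W i xs} \<subseteq> {xs. set xs \<subseteq> {1..n} \<and> distinct xs}"
    unfolding orderings_def by auto
  thus ?thesis using finite_subset_distinct[of "{1..n}"] finite_subset by auto
qed

lemma one:
  assumes "monotonic_game n W" and "i \<in> {1..n}" and "j \<in> {1..n}" and "i \<noteq> j"
  shows "shapley_shubik n (sym_weak_quarrel n W i j) i \<le> shapley_shubik n W i"
proof -
  have "{xs \<in> orderings n. pivotal (sym_weak_quarrel n W i j) i xs}
        \<subseteq> {xs \<in> orderings n. pivotal W i xs}"
  proof (rule subsetI)
    fix xs assume "xs \<in> {xs \<in> orderings n. pivotal (sym_weak_quarrel n W i j) i xs}"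
    hence o: "xs \<in> orderings n" and p: "pivotal (sym_weak_quarrel n W i j) i xs" by auto
    from p obtain k where k: "k < length xs" "xs ! k = i"
      "yes_decisive (sym_weak_quarrel n W i j) i (set (take (Suc k) xs))"
      unfolding pivotal_def by blast
    have "set (take (Suc k) xs) \<subseteq> set xs" by (rule set_take_subset)
    also have "set xs = {1..n}" using o unfolding orderings_def by simp
    finally have sub: "set (take (Suc k) xs) \<subseteq> {1..n}" .
    have "yes_decisive W i (set (take (Suc k) xs))" by (rule key[OF assms sub k(3)])
    hence "pivotal W i xs" using k(1,2) unfolding pivotal_def by blast
    thus "xs \<in> {xs \<in> orderings n. pivotal W i xs}" using o by simp
  qed
  hence "card {xs \<in> orderings n. pivotal (sym_weak_quarrel n W i j) i xs}
        \<le> card {xs \<in> orderings n. pivotal W i xs}" by (rule card_mono[OF fin])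
  thus ?thesis unfolding shapley_shubik_def by (simp add: divide_right_mono)
qed

theorem theorem14:
  fixes n i j :: nat and W :: "nat set set"
  assumes "monotonic_game n W"
    and "i \<in> {1..n}" and "j \<in> {1..n}" and "i \<noteq> j"
  shows "shapley_shubik n (sym_weak_quarrel n W i j) i \<le> shapley_shubik n W i
       \<and> shapley_shubik n (sym_weak_quarrel n W i j) j \<le> shapley_shubik n W j"
  using one[OF assms] one[of n W j i] assms swq_sym[of n W i j] by auto

end
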